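(* In the setting described in the context, let $u\in\mathbb{R}^I_{\ge0}$ with $\mathrm{tol}(u)\ne0$, let $j\in[\varepsilon^{-1}-1]$ and $t>0$. Then $$\Pr\left(u\cdot\gamma^j\ \ge\ \mathbb{E}\left[u\cdot\gamma^j\,\middle|\,\mathcal{F}_{j-1}\right]+t\cdot\mathrm{tol}(u)\right)\ \le\ \exp\left(-\frac{t^2}{2\varepsilon m}\right).$$
   Context: A CMK instance is $\mathcal{I}=(I,w,v,m,k)$ with $I$ a finite item set, $w:I\to[0,1]$, $v:I\to\mathbb{R}_{\ge0}$, $m,k\in\mathbb{N}_{>0}$. A configuration is $C\subseteq I$ with $|C|\le k$ and $\sum_{i\in C}w(i)\le1$; $\mathcal{C}$ is the set of configurations and $\mathcal{C}(i)=\{C\in\mathcal{C}:i\in C\}$. The tolerance of $u\in\mathbb{R}^I_{\ge0}$ is $\mathrm{tol}(u)=\max\{\sum_{i\in C}u_i: C\in\mathcal{C}\}$; $u\cdot y=\sum_iu_iy_i$. A solution is a tuple of $m$ configurations, with value $v$ of their union; $\mathrm{OPT}(\mathcal{I})$ is the maximum value. A fractional solution is $x\in\mathbb{R}_{\ge0}^{\mathcal{C}}$, with $\mathrm{cover}_i(x)=\sum_{C\in\mathcal{C}(i)}x_C$, $\|x\|=\sum_Cx_C$; it is feasible if $\mathrm{cover}(x)\in[0,1]^I$; for $y\in\mathbb{R}^I$, $v(y)=\sum_iy_iv(i)$, and $v(x)=v(\mathrm{cover}(x))$. For $S\subseteq I$ and $\ell\in\mathbb{N}$, $\mathrm{LP}(S,\ell)$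 is: maximize $v(x)$ over feasible fractional solutions $x$ with $x_C=0$ whenever $C\not\subseteq S$, and $\|x\|=\ell$. For $\|x\|\ne0$, a random configuration $R$ is distributed by $x$ ($R\sim x$) if $\Pr(R=C)=x_C/\|x\|$. Given $\varepsilon\in(0,0.1)$, $\mathcal{I}$ is $\varepsilon$-simple if $m>\exp(\exp(\varepsilon^{-30}))$ and $\varepsilon m\in\mathbb{N}$. Iterative randomized rounding: let $\varepsilon\in(0,0.1)$ with $\varepsilon^{-1/2}\in\mathbb{N}$ and $\mathcal{I}$ be $\varepsilon$-simple; let $q=\varepsilon m$ and $S_0=I$. For $j=1,\dots,\varepsilon^{-1}$: let $m_j=m(1-(j-1)\varepsilon)$; let $x^j$ be a $(1-\varepsilon)$-approximate solution of $\mathrm{LP}(S_{j-1},m_j)$ (a feasible solution of value at least $(1-\varepsilon)$ times its optimum), determined by the outcomes of the samples of previous iterations; sample independently $R^j_1,\dots,R^j_q\sim x^j$; set $S_j=S_{j-1}\setminus\bigcup_{b=1}^qR^j_b$. Let $\mathcal{F}_0$ be the trivial $\sigma$-algebra and $\mathcal{F}_j$ the $\sigma$-algebra generated by $\{R^{j'}_b: j'\le j,\ b\in[q]\}$. Fix an optimal solution $(C^*_1,\dots,C^*_m)$ and let $S^*=\bigcup_bC^*_b$ (so $v(S^* )=\mathrm{OPT}(\mathcal{I})$). Define $\gamma^0=\mathbb{1}_{S^*}\in\{0,1\}^I$ (indicator vector of $S^*$). For $j=1,\dots,\varepsilon^{-1}-1$ define $\lambda^j\in\mathbb{R}^I_{\ge0}$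 by $\lambda^j_i=\frac{1-j\varepsilon}{1-(j-1)\varepsilon}\cdot\frac{1}{\Pr(i\in S_j\mid\mathcal{F}_{j-1})}\cdot\gamma^{j-1}_i$ for $i\in S_{j-1}$ (this conditional probability is positive for such $i$) and $\lambda^j_i=0$ for $i\notin S_{j-1}$; and define $\gamma^j_i=\mathbb{1}_{i\in S_j}\cdot\lambda^j_i$ for all $i\in I$. *)

theory Defs
  imports "HOL-Probability.Probability"
begin

type_synonym 'a history = "'a set list list"
  \<comment> \<open>a history: the list of completed rounds; round j is the list of the q sampled
      configurations R^j_1, ..., R^j_q\<close>

definition configs :: "'a set \<Rightarrow> ('a \<Rightarrow> real) \<Rightarrow> nat \<Rightarrow> 'a set set" where
  "configs I w k = {C. C \<subseteq> I \<and> card C \<le> k \<and> (\<Sum>i\<in>C. w i) \<le> 1}"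

definition tol :: "'a set set \<Rightarrow> ('a \<Rightarrow> real) \<Rightarrow> real" where
  "tol Cs u = Max ((\<lambda>C. \<Sum>i\<in>C. u i) ` Cs)"

definition dotp :: "'a set \<Rightarrow> ('a \<Rightarrow> real) \<Rightarrow> ('a \<Rightarrow> real) \<Rightarrow> real" where
  "dotp I u y = (\<Sum>i\<in>I. u i * y i)"

definition setval :: "('a \<Rightarrow> real) \<Rightarrow> 'a set \<Rightarrow> real" where
  "setval v S = (\<Sum>i\<in>S. v i)"

definition cover :: "'a set set \<Rightarrow> ('a set \<Rightarrow> real) \<Rightarrow> 'a \<Rightarrow> real" where
  "cover Cs x i = (\<Sum>C\<in>{C\<in>Cs. i \<in> C}. x C)"

definition fnorm :: "'a set set \<Rightarrow> ('a set \<Rightarrow> real) \<Rightarrow> real" where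
  "fnorm Cs x = (\<Sum>C\<in>Cs. x C)"

definition vvec :: "'a set \<Rightarrow> ('a \<Rightarrow> real) \<Rightarrow> ('a \<Rightarrow> real) \<Rightarrow> real" where
  "vvec I v y = (\<Sum>i\<in>I. y i * v i)"

definition vfrac :: "'a set \<Rightarrow> 'a set set \<Rightarrow> ('a \<Rightarrow> real) \<Rightarrow> ('a set \<Rightarrow> real) \<Rightarrow> real" where
  "vfrac I Cs v x = vvec I v (cover Cs x)"

definition feasible_frac :: "'a set \<Rightarrow> 'a set set \<Rightarrow> ('a set \<Rightarrow> real) \<Rightarrow> bool" where
  "feasible_frac I Cs x \<longleftrightarrow> (\<forall>C. 0 \<le> x C) \<and> (\<forall>C. C \<notin> Cs \<longrightarrow> x C = 0)
      \<and> (\<forall>i\<in>I. 0 \<le> cover Cs x i \<and> cover Cs x i \<le> 1)"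

definition LP_feasible :: "'a set \<Rightarrow> 'a set set \<Rightarrow> 'a set \<Rightarrow> real \<Rightarrow> ('a set \<Rightarrow> real) \<Rightarrow> bool" where
  "LP_feasible I Cs S l x \<longleftrightarrow> feasible_frac I Cs x \<and> (\<forall>C. \<not> C \<subseteq> S \<longrightarrow> x C = 0)
      \<and> fnorm Cs x = l"

definition LP_opt :: "'a set \<Rightarrow> 'a set set \<Rightarrow> ('a \<Rightarrow> real) \<Rightarrow> 'a set \<Rightarrow> real \<Rightarrow> real" where
  "LP_opt I Cs v S l = Sup (vfrac I Cs v ` {x. LP_feasible I Cs S l x})"

definition approx_LP_sol ::
  "real \<Rightarrow> 'a set \<Rightarrow> 'a set set \<Rightarrow> ('a \<Rightarrow> real) \<Rightarrow> 'a set \<Rightarrow> real \<Rightarrow> ('a set \<Rightarrow> real) \<Rightarrow> bool" where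
  "approx_LP_sol \<epsilon> I Cs v S l x \<longleftrightarrow>
     LP_feasible I Cs S l x \<and> vfrac I Cs v x \<ge> (1 - \<epsilon>) * LP_opt I Cs v S l"

definition sample_pmf :: "'a set set \<Rightarrow> ('a set \<Rightarrow> real) \<Rightarrow> 'a set pmf" where
  "sample_pmf Cs x = embed_pmf (\<lambda>C. if C \<in> Cs then x C / fnorm Cs x else 0)"

text \<open>The iterative randomized rounding process: after j iterations, the distribution of the
  history of all samples. The strategy X maps the history of previous rounds to x^j.\<close>
primrec rr_process :: "'a set set \<Rightarrow> nat \<Rightarrow> ('a history \<Rightarrow> 'a set \<Rightarrow> real) \<Rightarrow> nat \<Rightarrow> 'a history pmf" where
  "rr_process Cs q X 0 = return_pmf []"
| "rr_process Cs q X (Suc j) =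
     bind_pmf (rr_process Cs q X j)
       (\<lambda>h. map_pmf (\<lambda>r. h @ [r]) (replicate_pmf q (sample_pmf Cs (X h))))"

definition Sset :: "'a set \<Rightarrow> 'a history \<Rightarrow> nat \<Rightarrow> 'a set" where
  "Sset I \<omega> j = I - \<Union> (set (concat (take j \<omega>)))"

text \<open>conditional probability / expectation w.r.t. the sigma-algebra generated by the
  (discrete) random variable g, evaluated at outcome omega\<close>
definition condP :: "'b pmf \<Rightarrow> ('b \<Rightarrow> 'c) \<Rightarrow> 'b set \<Rightarrow> 'b \<Rightarrow> real" where
  "condP P g A \<omega> = measure_pmf.prob (cond_pmf P {\<omega>'. g \<omega>' = g \<omega>}) A"

definition condE :: "'b pmf \<Rightarrow> ('b \<Rightarrow> 'c) \<Rightarrow> ('b \<Rightarrow> real) \<Rightarrow> 'b \<Rightarrow> real" where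
  "condE P g f \<omega> = measure_pmf.expectation (cond_pmf P {\<omega>'. g \<omega>' = g \<omega>}) f"

text \<open>gamma^j and lambda^j (F_j is generated by the first j rounds, i.e. by take j)\<close>
fun gamma :: "real \<Rightarrow> 'a set \<Rightarrow> 'a history pmf \<Rightarrow> 'a set \<Rightarrow> nat \<Rightarrow> 'a history \<Rightarrow> 'a \<Rightarrow> real"
and lambda :: "real \<Rightarrow> 'a set \<Rightarrow> 'a history pmf \<Rightarrow> 'a set \<Rightarrow> nat \<Rightarrow> 'a history \<Rightarrow> 'a \<Rightarrow> real" where
  "gamma \<epsilon> I P Sstar 0 \<omega> i = indicator Sstar i"
| "gamma \<epsilon> I P Sstar (Suc j) \<omega> i =
     (if i \<in> Sset I \<omega> (Suc j) then lambda \<epsilon> I P Sstar (Suc j) \<omega> i else 0)"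
| "lambda \<epsilon> I P Sstar 0 \<omega> i = 0"
| "lambda \<epsilon> I P Sstar (Suc j) \<omega> i =
     (if i \<in> Sset I \<omega> j then
        (1 - real (Suc j) * \<epsilon>) / (1 - real j * \<epsilon>)
        * (1 / condP P (\<lambda>\<omega>'. take j \<omega>') {\<omega>'. i \<in> Sset I \<omega>' (Suc j)} \<omega>)
        * gamma \<epsilon> I P Sstar j \<omega> i
      else 0)"

end

theory Submission
  imports Defs "HOL-Probability.Hoeffding"
begin


lemma fin_rep: "finite (set_pmf D) \<Longrightarrow> finite (set_pmf (replicate_pmf n D))"
  by (simp add: set_replicate_pmf lists_eq_set finite_lists_length_eq)

lemma E_bind_fin:
  fixes h :: "'b \<Rightarrow> real"
  assumes "finite (set_pmf p)" "\<And>x. x \<in> set_pmf p \<Longrightarrow> finite (set_pmf (f x))"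
  shows "measure_pmf.expectation (bind_pmf p f) h
       = measure_pmf.expectation p (\<lambda>a. measure_pmf.expectation (f a) h)"
  using pmf_expectation_bind[OF assms(1) assms(2) order_refl, where h=h]
        integral_measure_pmf_real[OF assms(1), where M=p and f="\<lambda>a. measure_pmf.expectation (f a) h"]
  by (simp add: mult.commute)

lemma E_rep_Suc:
  fixes h :: "'c list \<Rightarrow> real"
  assumes "finite (set_pmf D)"
  shows "measure_pmf.expectation (replicate_pmf (Suc n) D) h
       = measure_pmf.expectation D (\<lambda>x. measure_pmf.expectation (replicate_pmf n D) (\<lambda>xs. h (x#xs)))"
proof -
  have "replicate_pmf (Suc n) D = bind_pmf D (\<lambda>x. map_pmf (Cons x) (replicate_pmf n D))"
    by (simp add: map_pmf_def)
  then show ?thesis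
    using assms by (simp add: E_bind_fin fin_rep)
qed

lemma mgf_bound:
  fixes D :: "'c pmf" and f :: "'c list \<Rightarrow> real"
  assumes fin: "finite (set_pmf D)" and s: "s > 0" and c: "c \<ge> 0"
    and bd: "\<And>as bs x y. set as \<subseteq> set_pmf D \<Longrightarrow> set bs \<subseteq> set_pmf D \<Longrightarrow> x \<in> set_pmf D
              \<Longrightarrow> y \<in> set_pmf D \<Longrightarrow> length as + length bs + 1 = n
              \<Longrightarrow> f (as @ x # bs) - f (as @ y # bs) \<le> c"
  shows "measure_pmf.expectation (replicate_pmf n D)
           (\<lambda>r. exp (s * (f r - measure_pmf.expectation (replicate_pmf n D) f)))
         \<le> exp (real n * s^2 * c^2 / 8)"
  using bd
proof (induction n arbitrary: f)
  case 0
  then show ?case by simp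
next
  case (Suc n)
  define R where "R = replicate_pmf n D"
  define g where "g x = measure_pmf.expectation R (\<lambda>xs. f (x#xs))" for x
  define \<mu> where "\<mu> = measure_pmf.expectation D g"
  have finR: "finite (set_pmf R)" using fin by (simp add: R_def fin_rep)
  have mu: "measure_pmf.expectation (replicate_pmf (Suc n) D) f = \<mu>"
    unfolding \<mu>_def g_def R_def by (rule E_rep_Suc[OF fin])
  have IH: "measure_pmf.expectation R (\<lambda>xs. exp (s * (f (x#xs) - g x))) \<le> exp (real n * s^2 * c^2 / 8)"
    if x: "x \<in> set_pmf D" for x
    unfolding g_def R_def
  proof (rule Suc.IH)
    fix as bs y z
    assume "set as \<subseteq> set_pmf D" "set bs \<subseteq> set_pmf D" "y \<in> set_pmf D" "z \<in> set_pmf D"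
      "length as + length bs + 1 = n"
    then show "f (x # as @ y # bs) - f (x # as @ z # bs) \<le> c"
      using Suc.prems[of "x#as" bs y z] x by simp
  qed
  have eq1: "measure_pmf.expectation (replicate_pmf (Suc n) D)
           (\<lambda>r. exp (s * (f r - \<mu>)))
       = measure_pmf.expectation D (\<lambda>x. exp (s * (g x - \<mu>)) *
            measure_pmf.expectation R (\<lambda>xs. exp (s * (f (x#xs) - g x))))"
  proof -
    have "\<And>x xs. exp (s * (f (x#xs) - \<mu>)) = exp (s * (g x - \<mu>)) * exp (s * (f (x#xs) - g x))"
      by (simp add: mult_exp_exp algebra_simps)
    then show ?thesis
      by (simp add: E_rep_Suc fin R_def del: replicate_pmf.simps)
  qed
  also have "\<dots> \<le> measure_pmf.expectation D (\<lambda>x. exp (s * (g x - \<mu>)) * exp (real n * s^2 * c^2 / 8))"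
    by (intro integral_mono_AE integrable_measure_pmf_finite fin)
       (auto simp: AE_measure_pmf_iff intro!: mult_left_mono IH)
  also have "\<dots> = measure_pmf.expectation D (\<lambda>x. exp (s * (g x - \<mu>))) * exp (real n * s^2 * c^2 / 8)"
    by simp
  also have "measure_pmf.expectation D (\<lambda>x. exp (s * (g x - \<mu>))) \<le> exp (s^2 * c^2 / 8)"
  proof -
    obtain y0 where y0: "y0 \<in> set_pmf D" "\<forall>x\<in>set_pmf D. g y0 \<le> g x"
      using fin set_pmf_not_empty[of D]
      by (metis (mono_tags, lifting) all_not_in_conv finite_imageI Min_in Min_le image_iff image_is_empty)
    have rng: "g x \<le> g y0 + c" if x: "x \<in> set_pmf D" for x
    proof -
      have "g x - g y0 = measure_pmf.expectation R (\<lambda>xs. f (x#xs) - f (y0#xs))"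
        unfolding g_def
        by (subst Bochner_Integration.integral_diff) (auto intro: integrable_measure_pmf_finite finR)
      also have "\<dots> \<le> measure_pmf.expectation R (\<lambda>xs. c)"
      proof (intro integral_mono_AE integrable_measure_pmf_finite finR)
        show "AE xs in measure_pmf R. f (x # xs) - f (y0 # xs) \<le> c"
          unfolding AE_measure_pmf_iff
        proof
          fix xs assume "xs \<in> set_pmf R"
          then have "set xs \<subseteq> set_pmf D" "length xs = n"
            by (auto simp: R_def set_replicate_pmf)
          then show "f (x # xs) - f (y0 # xs) \<le> c"
            using Suc.prems[of "[]" xs x y0] x y0 by simp
        qed
      qed
      also have "\<dots> = c" by simp
      finally show ?thesis by simp
    qed
    interpret ibrv: interval_bounded_random_variable "measure_pmf D" g "g y0" "g y0 + c"
      by unfold_locales (auto simp: AE_measure_pmf_iff y0 rng)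
    have "(\<integral>\<^sup>+x. ennreal (exp (s * (g x - \<mu>))) \<partial>measure_pmf D) \<le> ennreal (exp (s\<^sup>2 * (g y0 + c - g y0)\<^sup>2 / 8))"
      using ibrv.Hoeffdings_lemma_nn_integral[OF s] by (simp add: \<mu>_def)
    also have "(\<integral>\<^sup>+x. ennreal (exp (s * (g x - \<mu>))) \<partial>measure_pmf D)
        = ennreal (measure_pmf.expectation D (\<lambda>x. exp (s * (g x - \<mu>))))"
      by (intro nn_integral_eq_integral integrable_measure_pmf_finite fin) auto
    finally show ?thesis by simp
  qed
  then have "measure_pmf.expectation D (\<lambda>x. exp (s * (g x - \<mu>))) * exp (real n * s^2 * c^2 / 8)
      \<le> exp (s^2 * c^2 / 8) * exp (real n * s^2 * c^2 / 8)"
    by (intro mult_right_mono) auto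
  also have "\<dots> = exp (real (Suc n) * s^2 * c^2 / 8)"
    by (simp add: mult_exp_exp algebra_simps add_divide_distrib)
  finally show ?case using mu by simp
qed


lemma mcd_tail:
  fixes D :: "'c pmf" and f :: "'c list \<Rightarrow> real"
  assumes fin: "finite (set_pmf D)" and c: "c > 0" and T: "T > 0" and n: "n > 0"
    and bd: "\<And>as bs x y. set as \<subseteq> set_pmf D \<Longrightarrow> set bs \<subseteq> set_pmf D \<Longrightarrow> x \<in> set_pmf D
              \<Longrightarrow> y \<in> set_pmf D \<Longrightarrow> length as + length bs + 1 = n
              \<Longrightarrow> f (as @ x # bs) - f (as @ y # bs) \<le> c"
  shows "measure_pmf.prob (replicate_pmf n D)
           {r. f r \<ge> measure_pmf.expectation (replicate_pmf n D) f + T}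
         \<le> exp (- 2 * T^2 / (real n * c^2))"
proof -
  define R where "R = replicate_pmf n D"
  define \<mu> where "\<mu> = measure_pmf.expectation R f"
  define s where "s = 4 * T / (real n * c^2)"
  have s: "s > 0" using c T n by (simp add: s_def)
  have finR: "finite (set_pmf R)" using fin by (simp add: R_def fin_rep)
  have "measure_pmf.prob R {r. f r \<ge> \<mu> + T}
      = measure_pmf.expectation R (indicator {r. f r \<ge> \<mu> + T})" by simp
  also have "\<dots> \<le> measure_pmf.expectation R (\<lambda>r. exp (- s * T) * exp (s * (f r - \<mu>)))"
  proof (intro integral_mono_AE integrable_measure_pmf_finite finR AE_I2)
    fix r
    show "indicator {r. f r \<ge> \<mu> + T} r \<le> exp (- s * T) * exp (s * (f r - \<mu>))"
    proof (cases "f r \<ge> \<mu> + T")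
      case True
      then have "s * T \<le> s * (f r - \<mu>)"
        using s by (intro mult_left_mono) auto
      then have "0 \<le> - s * T + s * (f r - \<mu>)" by simp
      then have "1 \<le> exp (- s * T + s * (f r - \<mu>))" by simp
      then show ?thesis using True by (simp add: mult_exp_exp)
    qed simp
  qed
  also have "\<dots> = exp (- s * T) * measure_pmf.expectation R (\<lambda>r. exp (s * (f r - \<mu>)))"
    by simp
  also have "\<dots> \<le> exp (- s * T) * exp (real n * s^2 * c^2 / 8)"
    using mgf_bound[where f=f and n=n, OF fin s less_imp_le[OF c] bd] unfolding R_def \<mu>_def
    by (intro mult_left_mono) auto
  also have "\<dots> = exp (- 2 * T^2 / (real n * c^2))"
    unfolding mult_exp_exp s_def using c n
    by (simp add: field_simps power2_eq_square)
  finally show ?thesis unfolding R_def \<mu>_def .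
qed




definition valid :: "'a set set \<Rightarrow> ('a set \<Rightarrow> real) \<Rightarrow> bool" where
  "valid Cs x \<longleftrightarrow> finite Cs \<and> (\<forall>C. 0 \<le> x C) \<and> (\<forall>C. C \<notin> Cs \<longrightarrow> x C = 0) \<and> fnorm Cs x > 0"

lemma pmf_sample:
  assumes "valid Cs x"
  shows "pmf (sample_pmf Cs x) C = (if C \<in> Cs then x C / fnorm Cs x else 0)"
proof -
  have fin: "finite Cs" and nn: "\<forall>C. 0 \<le> x C" and pos: "fnorm Cs x > 0"
    using assms by (auto simp: valid_def)
  have "(\<integral>\<^sup>+C. ennreal (if C \<in> Cs then x C / fnorm Cs x else 0) \<partial>count_space UNIV)
      = (\<Sum>C\<in>Cs. ennreal (if C \<in> Cs then x C / fnorm Cs x else 0))"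
    by (rule nn_integral_count_space') (auto simp: fin)
  also have "\<dots> = ennreal (\<Sum>C\<in>Cs. x C / fnorm Cs x)"
    using nn pos by (subst sum_ennreal) auto
  also have "(\<Sum>C\<in>Cs. x C / fnorm Cs x) = 1"
    using pos by (simp add: fnorm_def flip: sum_divide_distrib)
  finally show ?thesis
    unfolding sample_pmf_def
    by (subst pmf_embed_pmf) (use nn pos in auto)
qed

lemma set_sample: "valid Cs x \<Longrightarrow> set_pmf (sample_pmf Cs x) \<subseteq> Cs"
  by (auto simp: set_pmf_iff pmf_sample split: if_splits)

lemma fin_sample: "valid Cs x \<Longrightarrow> finite (set_pmf (sample_pmf Cs x))"
  using set_sample by (metis finite_subset valid_def)

lemma prob_sample:
  assumes "valid Cs x"
  shows "measure_pmf.prob (sample_pmf Cs x) {C. i \<in> C} = cover Cs x i / fnorm Cs x"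
proof -
  have "measure_pmf.prob (sample_pmf Cs x) {C. i \<in> C}
      = measure_pmf.prob (sample_pmf Cs x) {C\<in>Cs. i \<in> C}"
    using set_sample[OF assms]
    by (intro measure_eq_AE) (auto simp: AE_measure_pmf_iff)
  also have "\<dots> = (\<Sum>C\<in>{C\<in>Cs. i \<in> C}. pmf (sample_pmf Cs x) C)"
    using assms by (intro measure_measure_pmf_finite) (auto simp: valid_def)
  also have "\<dots> = (\<Sum>C\<in>{C\<in>Cs. i \<in> C}. x C / fnorm Cs x)"
    using assms by (intro sum.cong) (auto simp: pmf_sample)
  finally show ?thesis by (simp add: cover_def sum_divide_distrib)
qed

lemma len_rr: "\<omega> \<in> set_pmf (rr_process Cs q X n) \<Longrightarrow> length \<omega> = n"
  by (induction n arbitrary: \<omega>) (auto simp: set_replicate_pmf)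

lemma map_take_rr: "n \<le> N \<Longrightarrow> map_pmf (take n) (rr_process Cs q X N) = rr_process Cs q X n"
proof (induction N)
  case 0 then show ?case by simp
next
  case (Suc N)
  show ?case
  proof (cases "n = Suc N")
    case True
    then show ?thesis
      by (subst map_pmf_cong[where g=id]) (auto dest: len_rr simp: pmf.map_id)
  next
    case False
    then have n: "n \<le> N" using Suc by simp
    have "map_pmf (take n) (rr_process Cs q X (Suc N))
        = bind_pmf (rr_process Cs q X N) (\<lambda>h. return_pmf (take n h))"
      unfolding rr_process.simps map_bind_pmf pmf.map_comp o_def
    proof (intro bind_pmf_cong refl)
      fix h assume "h \<in> set_pmf (rr_process Cs q X N)"
      then have "length h = N" by (rule len_rr)
      then show "map_pmf (\<lambda>x. take n (h @ [x])) (replicate_pmf q (sample_pmf Cs (X h))) = return_pmf (take n h)"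
        using n by simp
    qed
    also have "\<dots> = map_pmf (take n) (rr_process Cs q X N)" by (simp add: map_pmf_def)
    finally show ?thesis using Suc n by simp
  qed
qed

lemma take_in_rr: "n \<le> N \<Longrightarrow> \<omega> \<in> set_pmf (rr_process Cs q X N) \<Longrightarrow> take n \<omega> \<in> set_pmf (rr_process Cs q X n)"
  by (metis map_take_rr pmf.set_map imageI)

lemma rr_ext: "n \<le> N \<Longrightarrow> h \<in> set_pmf (rr_process Cs q X n) \<Longrightarrow> \<exists>\<omega>\<in>set_pmf (rr_process Cs q X N). take n \<omega> = h"
  by (metis map_take_rr pmf.set_map imageE)


lemma fin_rr:
  assumes V: "\<forall>n<N. \<forall>h\<in>set_pmf (rr_process Cs q X n). valid Cs (X h)"
  shows "n \<le> N \<Longrightarrow> finite (set_pmf (rr_process Cs q X n))"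
proof (induction n)
  case 0 then show ?case by simp
next
  case (Suc n)
  have "finite (set_pmf (replicate_pmf q (sample_pmf Cs (X h))))" if "h \<in> set_pmf (rr_process Cs q X n)" for h
    using V that Suc.prems by (intro fin_rep fin_sample) (auto simp: Suc_le_eq)
  then show ?case
    using Suc by (auto intro!: finite_UN_I finite_imageI)
qed

lemma cond_step:
  assumes V: "\<forall>n<N. \<forall>h\<in>set_pmf (rr_process Cs q X n). valid Cs (X h)"
    and j0: "j0 < N" and h: "h \<in> set_pmf (rr_process Cs q X j0)"
  shows "cond_pmf (rr_process Cs q X (Suc j0)) {\<omega>. take j0 \<omega> = h}
       = map_pmf (\<lambda>r. h @ [r]) (replicate_pmf q (sample_pmf Cs (X h)))"
proof -
  define M where "M = rr_process Cs q X j0"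
  define K where "K h' = map_pmf (\<lambda>r. h' @ [r]) (replicate_pmf q (sample_pmf Cs (X h')))" for h'
  define A where "A = {\<omega>. take j0 \<omega> = h}"
  have rr: "rr_process Cs q X (Suc j0) = bind_pmf M K" by (simp add: M_def K_def[abs_def])
  have finM: "finite (set_pmf M)" using fin_rr[OF V] j0 by (simp add: M_def)
  have lenM: "length h' = j0" if "h' \<in> set_pmf M" for h' using that len_rr by (auto simp: M_def)
  have finK: "finite (set_pmf (K h'))" if "h' \<in> set_pmf M" for h'
    using that V j0 by (auto simp: K_def M_def intro!: fin_rep fin_sample)
  have hM: "h \<in> set_pmf M" using h by (simp add: M_def)
  have suppK: "set_pmf (K h') \<subseteq> {\<omega>. take j0 \<omega> = h'}" if "h' \<in> set_pmf M" for h'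
    using lenM[OF that] by (auto simp: K_def)
  have ne: "set_pmf (bind_pmf M K) \<inter> A \<noteq> {}"
  proof -
    obtain \<omega> where "\<omega> \<in> set_pmf (K h)" using set_pmf_not_empty[of "K h"] by blast
    then show ?thesis using hM suppK[OF hM] by (auto simp: A_def)
  qed
  have meas: "measure_pmf.prob (bind_pmf M K) A = pmf M h"
  proof -
    have "measure_pmf.prob (bind_pmf M K) A = measure_pmf.expectation (bind_pmf M K) (indicator A)"
      by simp
    also have "\<dots> = measure_pmf.expectation M (\<lambda>h'. measure_pmf.expectation (K h') (indicator A))"
      using finM finK by (rule E_bind_fin)
    also have "\<dots> = measure_pmf.expectation M (\<lambda>h'. if h' = h then 1 else 0)"
    proof (intro integral_cong_AE)
      show "AE h' in measure_pmf M. measure_pmf.expectation (K h') (indicator A :: _ \<Rightarrow> real) = (if h' = h then 1 else 0)"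
        unfolding AE_measure_pmf_iff
      proof
        fix h' assume h': "h' \<in> set_pmf M"
        have "measure_pmf.expectation (K h') (indicator A) = measure_pmf.prob (K h') A" by simp
        also have "\<dots> = (if h' = h then 1 else 0)"
          using lenM[OF h'] by (auto simp: K_def A_def)
        finally show "measure_pmf.expectation (K h') (indicator A :: _ \<Rightarrow> real) = (if h' = h then 1 else 0)" .
      qed
    qed auto
    also have "\<dots> = pmf M h"
      by (subst integral_measure_pmf_real[where A="{h}"]) (auto split: if_splits)
    finally show ?thesis .
  qed
  have pmfb: "pmf (bind_pmf M K) \<omega> = pmf (K h) \<omega> * pmf M h" if "\<omega> \<in> A" for \<omega>
  proof -
    have "pmf (bind_pmf M K) \<omega> = (\<integral>h'. pmf (K h') \<omega> \<partial>measure_pmf M)" by (rule pmf_bind)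
    also have "\<dots> = (\<Sum>h'\<in>{h}. pmf (K h') \<omega> * pmf M h')"
    proof (rule integral_measure_pmf_real)
      fix h' assume "h' \<in> set_pmf M" "pmf (K h') \<omega> \<noteq> 0"
      then have "\<omega> \<in> set_pmf (K h')" "h' \<in> set_pmf M" by (auto simp: set_pmf_iff)
      then show "h' \<in> {h}" using suppK that by (auto simp: A_def)
    qed auto
    finally show ?thesis by simp
  qed
  show ?thesis
    unfolding rr
  proof (rule pmf_eqI)
    fix \<omega>
    have pos: "pmf M h > 0" using hM by (simp add: pmf_positive)
    show "pmf (cond_pmf (bind_pmf M K) {\<omega>. take j0 \<omega> = h}) \<omega> = pmf (map_pmf (\<lambda>r. h @ [r]) (replicate_pmf q (sample_pmf Cs (X h)))) \<omega>"
    proof (cases "\<omega> \<in> A")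
      case True
      then show ?thesis
        using pmf_cond[OF ne, of \<omega>] meas pmfb[OF True] pos by (simp add: A_def K_def)
    next
      case False
      have "pmf (K h) \<omega> = 0" using False suppK[OF hM] by (auto simp: A_def set_pmf_iff)
      then show ?thesis
        using pmf_cond[OF ne, of \<omega>] False by (simp add: A_def K_def)
    qed
  qed
qed


lemma cond_E:
  fixes F :: "'a history \<Rightarrow> real"
  assumes V: "\<forall>n<N. \<forall>h\<in>set_pmf (rr_process Cs q X n). valid Cs (X h)"
    and j0: "j0 < N" and h: "h \<in> set_pmf (rr_process Cs q X j0)"
    and F: "\<And>\<omega>. F \<omega> = F (take (Suc j0) \<omega>)"
  shows "measure_pmf.expectation (cond_pmf (rr_process Cs q X N) {\<omega>. take j0 \<omega> = h}) F
       = measure_pmf.expectation (replicate_pmf q (sample_pmf Cs (X h))) (\<lambda>r. F (h @ [r]))"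
proof -
  define A where "A = {\<omega>::'a history. take j0 \<omega> = h}"
  have pre: "take (Suc j0) -` A = A" by (auto simp: A_def min_def)
  have ne: "set_pmf (rr_process Cs q X N) \<inter> take (Suc j0) -` A \<noteq> {}"
    using rr_ext[where n=j0 and N=N and Cs=Cs and q=q and X=X and h=h] j0 h unfolding pre by (auto simp: A_def)
  have "map_pmf (take (Suc j0)) (cond_pmf (rr_process Cs q X N) A)
      = cond_pmf (rr_process Cs q X (Suc j0)) A"
    using cond_map_pmf[OF ne] j0 by (simp add: map_take_rr pre)
  also have "\<dots> = map_pmf (\<lambda>r. h @ [r]) (replicate_pmf q (sample_pmf Cs (X h)))"
    unfolding A_def by (rule cond_step[OF V j0 h])
  finally have eq: "map_pmf (take (Suc j0)) (cond_pmf (rr_process Cs q X N) A) =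
      map_pmf (\<lambda>r. h @ [r]) (replicate_pmf q (sample_pmf Cs (X h)))" .
  have "measure_pmf.expectation (cond_pmf (rr_process Cs q X N) A) F
      = measure_pmf.expectation (cond_pmf (rr_process Cs q X N) A) (\<lambda>\<omega>. F (take (Suc j0) \<omega>))"
    by (intro Bochner_Integration.integral_cong refl F)
  also have "\<dots> = measure_pmf.expectation (map_pmf (take (Suc j0)) (cond_pmf (rr_process Cs q X N) A)) F"
    by simp
  also have "\<dots> = measure_pmf.expectation (replicate_pmf q (sample_pmf Cs (X h))) (\<lambda>r. F (h @ [r]))"
    unfolding eq by simp
  finally show ?thesis unfolding A_def .
qed





lemma Sset_app: "length h = n \<Longrightarrow> Sset I (h @ [r]) (Suc n) = Sset I h n - \<Union> (set r)"
  by (auto simp: Sset_def)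

lemma Sset_app0: "length h = n \<Longrightarrow> Sset I (h @ [r]) n = Sset I h n"
  by (auto simp: Sset_def)

lemma Sset_take: "n' \<le> n \<Longrightarrow> Sset I (take n \<omega>) n' = Sset I \<omega> n'"
  by (auto simp: Sset_def min_def)

lemma Sset_mono: "Sset I \<omega> (Suc n) \<subseteq> Sset I \<omega> n"
proof -
  have "set (take n \<omega>) \<subseteq> set (take (Suc n) \<omega>)" by (rule set_take_subset_set_take) simp
  then show ?thesis by (auto simp: Sset_def)
qed

lemma gamma_dep: "take n \<omega> = take n \<omega>' \<Longrightarrow> gamma \<epsilon> I P S n \<omega> i = gamma \<epsilon> I P S n \<omega>' i"
proof (induction n arbitrary: i)
  case 0 then show ?case by simp
next
  case (Suc n)
  have tn: "take n \<omega> = take n \<omega>'"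
  proof -
    have "take n (take (Suc n) \<omega>) = take n (take (Suc n) \<omega>')" using Suc.prems by simp
    then show ?thesis by (simp add: min_def)
  qed
  have S1: "Sset I \<omega> (Suc n) = Sset I \<omega>' (Suc n)" "Sset I \<omega> n = Sset I \<omega>' n"
    unfolding Sset_def using Suc.prems tn by simp_all
  have C: "condP P (\<lambda>\<omega>'. take n \<omega>') A \<omega> = condP P (\<lambda>\<omega>'. take n \<omega>') A \<omega>'" for A
    unfolding condP_def using tn by simp
  show ?case using Suc.IH[OF tn] S1 C by simp
qed

lemma lambda_dep:
  assumes tn: "take n \<omega> = take n \<omega>'"
  shows "lambda \<epsilon> I P S (Suc n) \<omega> i = lambda \<epsilon> I P S (Suc n) \<omega>' i"
proof -
  have S1: "Sset I \<omega> n = Sset I \<omega>' n"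
    unfolding Sset_def using tn by simp
  have C: "condP P (\<lambda>\<omega>'. take n \<omega>') A \<omega> = condP P (\<lambda>\<omega>'. take n \<omega>') A \<omega>'" for A
    unfolding condP_def using tn by simp
  show ?thesis using gamma_dep[OF tn, of \<epsilon> I P S i] S1 C by (simp only: lambda.simps)
qed

lemma prob_rep_all:
  assumes fin: "finite (set_pmf D)"
  shows "measure_pmf.prob (replicate_pmf q D) {r. \<forall>x\<in>set r. x \<in> B} = measure_pmf.prob D B ^ q"
proof (induction q)
  case 0 then show ?case by (simp add: indicator_def)
next
  case (Suc q)
  have "measure_pmf.prob (replicate_pmf (Suc q) D) {r. \<forall>x\<in>set r. x \<in> B}
      = measure_pmf.expectation (replicate_pmf (Suc q) D) (indicator {r. \<forall>x\<in>set r. x \<in> B})"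
    by (simp del: replicate_pmf.simps)
  also have "\<dots> = measure_pmf.expectation D (\<lambda>x. measure_pmf.expectation (replicate_pmf q D)
                 (\<lambda>xs. indicator B x * indicator {r. \<forall>x\<in>set r. x \<in> B} xs))"
    by (subst E_rep_Suc[OF fin]) (intro Bochner_Integration.integral_cong refl, simp split: split_indicator)
  also have "\<dots> = measure_pmf.expectation D (\<lambda>x. indicator B x * measure_pmf.prob D B ^ q)"
    using Suc.IH by simp
  also have "\<dots> = measure_pmf.prob D B ^ Suc q" by simp
  finally show ?case .
qed




lemma lambda_bound:
  fixes P :: "'a history pmf"
  assumes V: "\<forall>n<N. \<forall>h\<in>set_pmf (rr_process Cs q X n). valid Cs (X h)"
    and fn: "\<forall>n<N. \<forall>h\<in>set_pmf (rr_process Cs q X n). fnorm Cs (X h) = real m * (1 - real n * \<epsilon>)"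
    and cov: "\<forall>n<N. \<forall>h\<in>set_pmf (rr_process Cs q X n). \<forall>i\<in>I. cover Cs (X h) i \<le> 1 \<and> 0 \<le> cover Cs (X h) i"
    and P: "P = rr_process Cs q X N"
    and q: "real q = \<epsilon> * real m" and eps: "\<epsilon> > 0" and m: "m > 0"
    and n: "n < N" "real (Suc n) * \<epsilon> < 1"
    and h: "h \<in> set_pmf (rr_process Cs q X n)" and i: "i \<in> Sset I h n"
    and g: "0 \<le> gamma \<epsilon> I P S n h i" "gamma \<epsilon> I P S n h i \<le> 1"
  shows "0 \<le> lambda \<epsilon> I P S (Suc n) h i \<and> lambda \<epsilon> I P S (Suc n) h i \<le> 1"
proof -
  have len: "length h = n" using h len_rr by blast
  define D where "D = sample_pmf Cs (X h)"
  have vD: "valid Cs (X h)" using V n h by auto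
  have finD: "finite (set_pmf D)" using fin_sample[OF vD] D_def by simp
  define SS where "SS = {\<omega>'::'a history. i \<in> Sset I \<omega>' (Suc n)}"
  define cp where "cp = condP P (\<lambda>\<omega>'. take n \<omega>') SS h"
  have "cp = measure_pmf.expectation (cond_pmf P {\<omega>'. take n \<omega>' = h}) (indicator SS)"
    unfolding cp_def condP_def using len by simp
  also have "\<dots> = measure_pmf.expectation (replicate_pmf q D) (\<lambda>r. indicator SS (h @ [r]))"
    unfolding P D_def
    by (rule cond_E[OF V n(1) h]) (simp add: SS_def indicator_def Sset_take)
  also have "(\<lambda>r. indicator SS (h @ [r]) :: real) = indicator {r. \<forall>C\<in>set r. C \<in> {C. i \<notin> C}}"
    using i by (auto simp: SS_def Sset_app[OF len] indicator_def)
  also have "measure_pmf.expectation (replicate_pmf q D) (indicator {r. \<forall>C\<in>set r. C \<in> {C. i \<notin> C}})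
      = measure_pmf.prob D {C. i \<notin> C} ^ q"
    using prob_rep_all[OF finD, of q "{C. i \<notin> C}"] by (simp del: mem_Collect_eq)
  also have "measure_pmf.prob D {C. i \<notin> C} = 1 - measure_pmf.prob D {C. i \<in> C}"
    using measure_pmf.prob_compl[of "{C. i \<in> C}" D] by (simp add: Compl_eq Diff_eq)
  also have "measure_pmf.prob D {C. i \<in> C} = cover Cs (X h) i / fnorm Cs (X h)"
    unfolding D_def by (rule prob_sample[OF vD])
  finally have cp: "cp = (1 - cover Cs (X h) i / fnorm Cs (X h)) ^ q" .
  define a where "a = 1 - real n * \<epsilon>"
  have a: "a > \<epsilon>" using n(2) by (simp add: a_def algebra_simps)
  have fnh: "fnorm Cs (X h) = real m * a" using fn n h by (simp add: a_def)
  have iI: "i \<in> I" using i by (simp add: Sset_def)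
  have c01: "cover Cs (X h) i \<le> 1" "0 \<le> cover Cs (X h) i" using cov n h iI by auto
  define p where "p = cover Cs (X h) i / fnorm Cs (X h)"
  have mpos: "real m > 0" using m by simp
  have p0: "0 \<le> p" using c01 fnh a eps mpos by (simp add: p_def)
  have p1: "p \<le> 1"
  proof -
    have "p = measure_pmf.prob D {C. i \<in> C}" unfolding p_def D_def by (rule prob_sample[OF vD, symmetric])
    then show ?thesis by simp
  qed
  have qp: "real q * p \<le> \<epsilon> / a"
  proof -
    have "real q * p = \<epsilon> * cover Cs (X h) i / a"
      unfolding p_def fnh q using mpos a eps by (simp add: field_simps)
    also have "\<dots> \<le> \<epsilon> * 1 / a" using c01 a eps by (intro divide_right_mono mult_left_mono) auto
    finally show ?thesis by simp
  qed
  define \<rho> where "\<rho> = (1 - real (Suc n) * \<epsilon>) / (1 - real n * \<epsilon>)"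
  have rho: "\<rho> = 1 - \<epsilon> / a" using a eps unfolding \<rho>_def a_def by (simp add: field_simps)
  have rho0: "\<rho> > 0" using a eps by (simp add: rho field_simps)
  have "1 + real q * (- p) \<le> (1 + - p) ^ q"
    using p1 by (intro Bernoulli_inequality) simp
  then have cpge: "\<rho> \<le> cp" using qp by (simp add: cp rho p_def)
  have lam: "lambda \<epsilon> I P S (Suc n) h i = \<rho> * (1 / cp) * gamma \<epsilon> I P S n h i"
    using i by (simp add: \<rho>_def cp_def SS_def)
  have r1: "\<rho> * (1 / cp) \<le> 1" using cpge rho0 by (simp add: field_simps)
  have r0: "0 \<le> \<rho> * (1 / cp)" using cpge rho0 by simp
  show ?thesis
    unfolding lam using r0 r1 g mult_le_one[OF r1 g(1) g(2)] by (simp del: times_divide_eq_right divide_inverse)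
qed


lemma gamma_bound:
  fixes P :: "'a history pmf"
  assumes V: "\<forall>n<N. \<forall>h\<in>set_pmf (rr_process Cs q X n). valid Cs (X h)"
    and fn: "\<forall>n<N. \<forall>h\<in>set_pmf (rr_process Cs q X n). fnorm Cs (X h) = real m * (1 - real n * \<epsilon>)"
    and cov: "\<forall>n<N. \<forall>h\<in>set_pmf (rr_process Cs q X n). \<forall>i\<in>I. cover Cs (X h) i \<le> 1 \<and> 0 \<le> cover Cs (X h) i"
    and P: "P = rr_process Cs q X N"
    and q: "real q = \<epsilon> * real m" and eps: "\<epsilon> > 0" and m: "m > 0"
    and j: "j < N" "real j * \<epsilon> < 1"
  shows "n \<le> j \<Longrightarrow> h \<in> set_pmf (rr_process Cs q X n) \<Longrightarrow>
           0 \<le> gamma \<epsilon> I P S n h i \<and> gamma \<epsilon> I P S n h i \<le> 1"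
proof (induction n arbitrary: h i)
  case 0 then show ?case by (simp add: indicator_def)
next
  case (Suc n)
  define h0 where "h0 = take n h"
  have h0: "h0 \<in> set_pmf (rr_process Cs q X n)"
    unfolding h0_def by (rule take_in_rr[OF _ Suc.prems(2)]) simp
  have IH: "0 \<le> gamma \<epsilon> I P S n h0 i \<and> gamma \<epsilon> I P S n h0 i \<le> 1"
    using Suc.IH[OF _ h0] Suc.prems by simp
  have lam: "lambda \<epsilon> I P S (Suc n) h i = lambda \<epsilon> I P S (Suc n) h0 i"
    by (rule lambda_dep) (simp add: h0_def)
  have nb: "n < N" "real (Suc n) * \<epsilon> < 1"
  proof -
    show "n < N" using Suc.prems j by simp
    have "real (Suc n) * \<epsilon> \<le> real j * \<epsilon>" using Suc.prems eps by (intro mult_right_mono) auto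
    then show "real (Suc n) * \<epsilon> < 1" using j by simp
  qed
  show ?case
  proof (cases "i \<in> Sset I h (Suc n)")
    case True
    then have "i \<in> Sset I h0 n" using Sset_mono[of I h n] by (auto simp: h0_def Sset_take)
    then have "0 \<le> lambda \<epsilon> I P S (Suc n) h0 i \<and> lambda \<epsilon> I P S (Suc n) h0 i \<le> 1"
      using lambda_bound[OF V fn cov P q eps m nb h0 _ ] IH by blast
    then show ?thesis using True lam by simp
  qed simp
qed

lemma bd_abstract:
  fixes u L :: "'a \<Rightarrow> real"
  assumes fin: "finite I" and u: "\<forall>i\<in>I. 0 \<le> u i" and L: "\<forall>i\<in>T. 0 \<le> L i \<and> L i \<le> 1"
    and y: "y \<subseteq> I"
  shows "(\<Sum>i\<in>I. u i * (if i \<in> T - \<Union> (set (as @ x # bs)) then L i else 0))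
       - (\<Sum>i\<in>I. u i * (if i \<in> T - \<Union> (set (as @ y # bs)) then L i else 0)) \<le> (\<Sum>i\<in>y. u i)"
proof -
  have "(\<Sum>i\<in>I. u i * (if i \<in> T - \<Union> (set (as @ x # bs)) then L i else 0))
       - (\<Sum>i\<in>I. u i * (if i \<in> T - \<Union> (set (as @ y # bs)) then L i else 0))
      = (\<Sum>i\<in>I. u i * (if i \<in> T - \<Union> (set (as @ x # bs)) then L i else 0)
                 - u i * (if i \<in> T - \<Union> (set (as @ y # bs)) then L i else 0))"
    by (simp add: sum_subtractf)
  also have "\<dots> \<le> (\<Sum>i\<in>I. if i \<in> y then u i else 0)"
  proof (rule sum_mono)
    fix i assume iI: "i \<in> I"
    show "u i * (if i \<in> T - \<Union> (set (as @ x # bs)) then L i else 0)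
                 - u i * (if i \<in> T - \<Union> (set (as @ y # bs)) then L i else 0) \<le> (if i \<in> y then u i else 0)"
    proof (cases "i \<in> y")
      case True
      have "u i * (if i \<in> T - \<Union> (set (as @ x # bs)) then L i else 0) \<le> u i * 1"
        using u iI L by (intro mult_left_mono) auto
      moreover have "0 \<le> u i * (if i \<in> T - \<Union> (set (as @ y # bs)) then L i else 0)"
        using u iI L by auto
      ultimately show ?thesis using True by simp
    next
      case False
      show ?thesis
      proof (cases "i \<in> T - \<Union> (set (as @ x # bs))")
        case True
        then have "i \<in> T - \<Union> (set (as @ y # bs))" using False by auto
        then show ?thesis using True False by simp
      next
        case F2: False
        then show ?thesis using False u iI L by auto
      qed
    qed
  qed
  also have "\<dots> = (\<Sum>i\<in>y. u i)"
    using y fin by (simp add: sum.inter_restrict[symmetric] Int_absorb1 flip: sum.inter_filter)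
  finally show ?thesis .
qed




theorem lemma4p7:
  fixes I :: "'a set" and w v :: "'a \<Rightarrow> real" and m k :: nat and \<epsilon> :: real
    and X :: "'a history \<Rightarrow> 'a set \<Rightarrow> real"
    and Cstar :: "nat \<Rightarrow> 'a set" and u :: "'a \<Rightarrow> real" and j :: nat and t :: real
  assumes finI: "finite I"
    and w_range: "\<forall>i\<in>I. 0 \<le> w i \<and> w i \<le> 1"
    and v_nonneg: "\<forall>i\<in>I. 0 \<le> v i"
    and m_pos: "m > 0" and k_pos: "k > 0"
    and eps: "0 < \<epsilon>" "\<epsilon> < 0.1" "sqrt (1 / \<epsilon>) \<in> \<nat>"
    and simple: "real m > exp (exp ((1 / \<epsilon>) ^ 30))" "\<epsilon> * real m \<in> \<nat>"
    and X_approx: "\<forall>j'\<in>{1..nat \<lfloor>1 / \<epsilon>\<rfloor>}.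
        \<forall>h\<in>set_pmf (rr_process (configs I w k) (nat \<lfloor>\<epsilon> * real m\<rfloor>) X (j' - 1)).
          approx_LP_sol \<epsilon> I (configs I w k) v (Sset I h (j' - 1))
             (real m * (1 - (real j' - 1) * \<epsilon>)) (X h)"
    and opt_confs: "\<forall>b<m. Cstar b \<in> configs I w k"
    and opt: "\<forall>f. (\<forall>b<m. f b \<in> configs I w k) \<longrightarrow>
                 setval v (\<Union>b<m. f b) \<le> setval v (\<Union>b<m. Cstar b)"
    and u_nonneg: "\<forall>i\<in>I. 0 \<le> u i"
    and tol_nz: "tol (configs I w k) u \<noteq> 0"
    and j_range: "j \<in> {1..nat \<lfloor>1 / \<epsilon>\<rfloor> - 1}"
    and t_pos: "t > 0"
  shows "measure_pmf.prob
           (rr_process (configs I w k) (nat \<lfloor>\<epsilon> * real m\<rfloor>) X (nat \<lfloor>1 / \<epsilon>\<rfloor>))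
           {\<omega>. dotp I u (gamma \<epsilon> I
                   (rr_process (configs I w k) (nat \<lfloor>\<epsilon> * real m\<rfloor>) X (nat \<lfloor>1 / \<epsilon>\<rfloor>))
                   (\<Union>b<m. Cstar b) j \<omega>)
                 \<ge> condE (rr_process (configs I w k) (nat \<lfloor>\<epsilon> * real m\<rfloor>) X (nat \<lfloor>1 / \<epsilon>\<rfloor>))
                     (\<lambda>\<omega>'. take (j - 1) \<omega>')
                     (\<lambda>\<omega>'. dotp I u (gamma \<epsilon> I
                        (rr_process (configs I w k) (nat \<lfloor>\<epsilon> * real m\<rfloor>) X (nat \<lfloor>1 / \<epsilon>\<rfloor>))
                        (\<Union>b<m. Cstar b) j \<omega>')) \<omega>
                   + t * tol (configs I w k) u}
         \<le> exp (- (t ^ 2) / (2 * \<epsilon> * real m))"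
proof -
  define Cs where "Cs = configs I w k"
  define q where "q = nat \<lfloor>\<epsilon> * real m\<rfloor>"
  define N where "N = nat \<lfloor>1 / \<epsilon>\<rfloor>"
  define P where "P = rr_process Cs q X N"
  define S where "S = (\<Union>b<m. Cstar b)"
  define tl where "tl = tol Cs u"
  define B where "B = exp (- (t ^ 2) / (2 * \<epsilon> * real m))"
  have finCs: "finite Cs"
    by (rule finite_subset[of _ "Pow I"]) (auto simp: Cs_def configs_def finI)
  have emptyCs: "{} \<in> Cs" by (simp add: Cs_def configs_def)
  have CsI: "C \<subseteq> I" if "C \<in> Cs" for C using that by (simp add: Cs_def configs_def)
  obtain k0 where k0: "\<epsilon> * real m = real k0" using simple(2) Nats_cases by metis
  have q: "real q = \<epsilon> * real m" by (simp add: q_def k0)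
  have mpos: "real m > 0" using m_pos by simp
  have qpos: "q > 0" using q eps(1) mpos by (metis of_nat_0_less_iff mult_pos_pos)
  have N_le: "real N \<le> 1 / \<epsilon>"
    unfolding N_def using eps(1) by (simp add: of_nat_nat)
  have jN: "j < N" using j_range by (auto simp: N_def)
  obtain j0 where j: "j = Suc j0" using j_range by (cases j) auto
  have neps: "real n * \<epsilon> < 1" if "n \<le> j" for n
  proof -
    have "real n < 1 / \<epsilon>" using that jN N_le by linarith
    then show ?thesis using eps(1) by (simp add: field_simps)
  qed
  have Xf: "(\<forall>C. 0 \<le> X h C) \<and> (\<forall>C. C \<notin> Cs \<longrightarrow> X h C = 0)
            \<and> (\<forall>i\<in>I. 0 \<le> cover Cs (X h) i \<and> cover Cs (X h) i \<le> 1)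
            \<and> fnorm Cs (X h) = real m * (1 - real n * \<epsilon>)"
    if n: "n < N" and h: "h \<in> set_pmf (rr_process Cs q X n)" for n h
  proof -
    have "Suc n \<in> {1..nat \<lfloor>1 / \<epsilon>\<rfloor>}" using n by (simp add: N_def)
    then have "approx_LP_sol \<epsilon> I Cs v (Sset I h n) (real m * (1 - (real (Suc n) - 1) * \<epsilon>)) (X h)"
      using X_approx h unfolding Cs_def q_def by fastforce
    then show ?thesis by (simp add: approx_LP_sol_def LP_feasible_def feasible_frac_def)
  qed
  have V: "\<forall>n<N. \<forall>h\<in>set_pmf (rr_process Cs q X n). valid Cs (X h)"
  proof (intro allI impI ballI)
    fix n h assume n: "n < N" and h: "h \<in> set_pmf (rr_process Cs q X n)"
    have "real n * \<epsilon> < 1"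
    proof -
      have "real n < 1 / \<epsilon>" using n N_le by linarith
      then show ?thesis using eps(1) by (simp add: field_simps)
    qed
    then have "real m * (1 - real n * \<epsilon>) > 0" using mpos by simp
    then show "valid Cs (X h)" using Xf[OF n h] finCs by (simp add: valid_def)
  qed
  have fn: "\<forall>n<N. \<forall>h\<in>set_pmf (rr_process Cs q X n). fnorm Cs (X h) = real m * (1 - real n * \<epsilon>)"
    using Xf by blast
  have cov: "\<forall>n<N. \<forall>h\<in>set_pmf (rr_process Cs q X n). \<forall>i\<in>I. cover Cs (X h) i \<le> 1 \<and> 0 \<le> cover Cs (X h) i"
    using Xf by blast
  have tl_ge: "(\<Sum>i\<in>C. u i) \<le> tl" if "C \<in> Cs" for C
    unfolding tl_def tol_def using that finCs by (intro Max_ge) auto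
  have tl_pos: "tl > 0"
    using tl_ge[OF emptyCs] tol_nz by (simp add: tl_def Cs_def)
  define Y where "Y \<omega> = dotp I u (gamma \<epsilon> I P S j \<omega>)" for \<omega>
  have Yinv: "Y (take j' \<omega>) = Y \<omega>" if "j \<le> j'" for \<omega> j'
  proof -
    have "take j (take j' \<omega>) = take j \<omega>" using that by (simp add: min_def)
    then show ?thesis unfolding Y_def dotp_def using gamma_dep by metis
  qed
  define E where "E = {\<omega>. Y \<omega> \<ge> condE P (\<lambda>\<omega>'. take j0 \<omega>') Y \<omega> + t * tl}"
  have E_inv: "take j -` E = E"
  proof -
    have "take j0 (take j \<omega>) = take j0 \<omega>" for \<omega> :: "'a history" by (simp add: j min_def)
    then show ?thesis by (auto simp: E_def condE_def Yinv)
  qed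
  have step1: "measure_pmf.prob P E = measure_pmf.prob (rr_process Cs q X j) E"
  proof -
    have "measure_pmf.prob P E = measure_pmf.prob P (take j -` E)" by (simp add: E_inv)
    also have "\<dots> = measure_pmf.prob (map_pmf (take j) P) E" by simp
    also have "map_pmf (take j) P = rr_process Cs q X j" unfolding P_def using jN by (simp add: map_take_rr)
    finally show ?thesis .
  qed
  define K where "K h = map_pmf (\<lambda>r. h @ [r]) (replicate_pmf q (sample_pmf Cs (X h)))" for h
  define M where "M = rr_process Cs q X j0"
  have rrj: "rr_process Cs q X j = bind_pmf M K" by (simp add: j M_def K_def[abs_def])
  have finM: "finite (set_pmf M)" unfolding M_def using jN j by (intro fin_rr[OF V]) simp
  have finK: "finite (set_pmf (K h))" if "h \<in> set_pmf M" for h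
  proof -
    have "j0 < N" using jN j by simp
    then have "valid Cs (X h)" using that V by (auto simp: M_def)
    then show ?thesis unfolding K_def pmf.set_map by (intro finite_imageI fin_rep fin_sample)
  qed
  have key: "measure_pmf.prob (K h) E \<le> B" if h: "h \<in> set_pmf M" for h
  proof -
    have hM: "h \<in> set_pmf (rr_process Cs q X j0)" using h by (simp add: M_def)
    have len: "length h = j0" using hM len_rr by blast
    have j0N: "j0 < N" using jN j by simp
    define D where "D = sample_pmf Cs (X h)"
    have vD: "valid Cs (X h)" using V j0N hM by auto
    have finD: "finite (set_pmf D)" using fin_sample[OF vD] by (simp add: D_def)
    have suppD: "set_pmf D \<subseteq> Cs" using set_sample[OF vD] by (simp add: D_def)
    define f where "f r = Y (h @ [r])" for r
    define L where "L i = lambda \<epsilon> I P S j h i" for i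
    have gform: "gamma \<epsilon> I P S j (h @ [r]) i = (if i \<in> Sset I h j0 - \<Union> (set r) then L i else 0)" for r i
    proof -
      have "lambda \<epsilon> I P S (Suc j0) (h @ [r]) i = lambda \<epsilon> I P S (Suc j0) h i"
        by (rule lambda_dep) (simp add: len)
      then show ?thesis by (simp add: j L_def Sset_app[OF len])
    qed
    have fform: "f r = (\<Sum>i\<in>I. u i * (if i \<in> Sset I h j0 - \<Union> (set r) then L i else 0))" for r
      by (simp add: f_def Y_def dotp_def gform)
    have Lb: "\<forall>i\<in>Sset I h j0. 0 \<le> L i \<and> L i \<le> 1"
    proof
      fix i assume i: "i \<in> Sset I h j0"
      have g: "0 \<le> gamma \<epsilon> I P S j0 h i \<and> gamma \<epsilon> I P S j0 h i \<le> 1"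
        by (rule gamma_bound[OF V fn cov P_def q eps(1) m_pos jN neps[OF order_refl]]) (use j hM in auto)
      have "real (Suc j0) * \<epsilon> < 1" using neps[of "Suc j0"] j by simp
      then show "0 \<le> L i \<and> L i \<le> 1"
        unfolding L_def j using lambda_bound[OF V fn cov P_def q eps(1) m_pos j0N _ hM i] g by blast
    qed
    have condf: "condE P (\<lambda>\<omega>'. take j0 \<omega>') Y (h @ [r]) = measure_pmf.expectation (replicate_pmf q D) f" for r
    proof -
      have "condE P (\<lambda>\<omega>'. take j0 \<omega>') Y (h @ [r])
          = measure_pmf.expectation (cond_pmf P {\<omega>'. take j0 \<omega>' = h}) Y"
        by (simp add: condE_def len)
      also have "\<dots> = measure_pmf.expectation (replicate_pmf q D) f"
        unfolding P_def D_def f_def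
        by (rule cond_E[OF V j0N hM]) (simp add: Yinv j)
      finally show ?thesis .
    qed
    have "measure_pmf.prob (K h) E = measure_pmf.prob (replicate_pmf q D) {r. h @ [r] \<in> E}"
      by (simp add: K_def D_def vimage_def)
    also have "{r. h @ [r] \<in> E} = {r. f r \<ge> measure_pmf.expectation (replicate_pmf q D) f + t * tl}"
      by (simp add: E_def condf f_def)
    also have "measure_pmf.prob (replicate_pmf q D) \<dots> \<le> exp (- 2 * (t * tl)^2 / (real q * tl^2))"
    proof (rule mcd_tail[OF finD tl_pos _ qpos])
      show "t * tl > 0" using t_pos tl_pos by simp
      fix as bs x y
      assume as: "set as \<subseteq> set_pmf D" and bs: "set bs \<subseteq> set_pmf D" and x: "x \<in> set_pmf D"
        and y: "y \<in> set_pmf D"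
      have yI: "y \<subseteq> I" using y suppD CsI by blast
      have "f (as @ x # bs) - f (as @ y # bs) \<le> (\<Sum>i\<in>y. u i)"
        unfolding fform by (rule bd_abstract[OF finI u_nonneg Lb yI])
      also have "\<dots> \<le> tl" using y suppD tl_ge by blast
      finally show "f (as @ x # bs) - f (as @ y # bs) \<le> tl" .
    qed
    also have "\<dots> \<le> B"
    proof -
      have "- 2 * (t * tl)^2 / (real q * tl^2) = - 2 * t^2 / real q"
        using tl_pos by (simp add: power_mult_distrib)
      also have "\<dots> \<le> - (t ^ 2) / (2 * \<epsilon> * real m)"
        using qpos unfolding mult.assoc q[symmetric] by (simp add: field_simps)
      finally show ?thesis unfolding B_def by simp
    qed
    finally show ?thesis .
  qed
  have "measure_pmf.prob (bind_pmf M K) E = measure_pmf.expectation (bind_pmf M K) (indicator E)"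
    by simp
  also have "\<dots> = measure_pmf.expectation M (\<lambda>h. measure_pmf.expectation (K h) (indicator E))"
    using finM finK by (rule E_bind_fin)
  also have "\<dots> \<le> measure_pmf.expectation M (\<lambda>h. B)"
    using key by (intro integral_mono_AE integrable_measure_pmf_finite finM) (auto simp: AE_measure_pmf_iff)
  also have "\<dots> = B" by simp
  finally have main: "measure_pmf.prob P E \<le> B" using step1 rrj by simp
  have jm1: "j - 1 = j0" using j by simp
  show ?thesis
    using main unfolding E_def Y_def jm1 B_def P_def Cs_def q_def N_def S_def tl_def .
qed


end
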